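(* There exists $\lambda_{**}>0$ such that for all $\lambda\in(0,\lambda_{**})$ one has $\mathcal{N}_\lambda^0=\{0\}$.
   Context: Let $s\in(0,1)$, $p>1$, $n>ps$, $p_s^*=\frac{np}{n-ps}$, $\Omega\subset\mathbb{R}^n$ a bounded smooth domain, $a,b>0$, $\theta>1$, $\alpha\in(0,1)$, $c\in L^\infty(\Omega)$, $c\ge0$, $\lambda>0$, and $1<p<p\theta<q\le p_s^*$. $X_0$ is the space of measurable $u$ on $\mathbb{R}^n$ vanishing a.e. outside $\Omega$ with $\|u\|:=\big(\int_{\mathbb{R}^{2n}}\frac{|u(x)-u(y)|^p}{|x-y|^{n+ps}}dxdy\big)^{1/p}<\infty$; $\|u\|_r$ is the $L^r(\Omega)$ norm; $u^+=\max\{u,0\}$. $f$ is homogeneous of order $q-1$ in the second variable, $F(x,t)=\int_0^tf(x,\tau)d\tau$, $qF=tf$, $|F(x,t)|\le\gamma|t|^q$. For $u\in X_0$ set $\varphi_u'(1)=a\|u\|^p+\|u\|_p^p+b\|u\|^{p\theta}-\int_\Omega c(u^+)^{1-\alpha}-\lambda q\int_\Omega F(x,u^+)$ and $\varphi_u''(1)=(p-1)(a\|u\|^p+\|u\|_p^p)+b(p\theta-1)\|u\|^{p\theta}+\alpha\int_\Omega c(u^+)^{1-\alpha}-\lambda q(q-1)\int_\Omega F(x,u^+)$; $\mathcal{N}_\lambda^0=\{u\in X_0:\varphi_u'(1)=0,\ \varphi_u''(1)=0\}$. *)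

theory Defs
  imports "HOL-Analysis.Analysis"
begin

text \<open>Encoded coinductively: g lies in a family S of functions, each continuous on U and each
  having all partial derivatives on U, these again belonging to S.\<close>
definition smooth_on :: "(real^'n) set \<Rightarrow> (real^'n \<Rightarrow> real) \<Rightarrow> bool" where
  "smooth_on U g \<longleftrightarrow> (\<exists>S. g \<in> S \<and> (\<forall>h\<in>S. continuous_on U h \<and>
      (\<forall>i. \<exists>h'\<in>S. \<forall>x\<in>U. ((\<lambda>t. h (x + t *\<^sub>R axis i 1)) has_real_derivative h' x) (at 0))))"

definition smooth_bounded_domain :: "(real^'n) set \<Rightarrow> bool" where
  "smooth_bounded_domain \<Omega> \<longleftrightarrow> open \<Omega> \<and> connected \<Omega> \<and> \<Omega> \<noteq> {} \<and> bounded \<Omega> \<and>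
     (\<forall>x\<in>frontier \<Omega>. \<exists>U \<phi>. open U \<and> x \<in> U \<and> smooth_on U \<phi> \<and>
        (\<forall>y\<in>U. \<exists>D. (\<phi> has_derivative D) (at y) \<and> D \<noteq> (\<lambda>_. 0)) \<and>
        \<Omega> \<inter> U = {y\<in>U. \<phi> y < 0})"

definition gagliardo_int :: "real \<Rightarrow> real \<Rightarrow> (real^'n \<Rightarrow> real) \<Rightarrow> ennreal" where
  "gagliardo_int p s u = (\<integral>\<^sup>+ z. ennreal (\<bar>u (fst z) - u (snd z)\<bar> powr p /
       norm (fst z - snd z) powr (real CARD('n) + p * s)) \<partial>(lebesgue :: ((real^'n) \<times> (real^'n)) measure))"

definition X0norm :: "real \<Rightarrow> real \<Rightarrow> (real^'n \<Rightarrow> real) \<Rightarrow> real" where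
  "X0norm p s u = enn2real (gagliardo_int p s u) powr (1 / p)"

definition X0 :: "real \<Rightarrow> real \<Rightarrow> (real^'n) set \<Rightarrow> (real^'n \<Rightarrow> real) set" where
  "X0 p s \<Omega> = {u. u \<in> borel_measurable lebesgue \<and>
      (AE x in lebesgue. x \<notin> \<Omega> \<longrightarrow> u x = 0) \<and> gagliardo_int p s u < \<infinity>}"

definition Lnorm :: "(real^'n) set \<Rightarrow> real \<Rightarrow> (real^'n \<Rightarrow> real) \<Rightarrow> real" where
  "Lnorm \<Omega> r u = (LINT x:\<Omega>|lebesgue. \<bar>u x\<bar> powr r) powr (1 / r)"

definition phi1 :: "real \<Rightarrow> real \<Rightarrow> (real^'n) set \<Rightarrow> real \<Rightarrow> real \<Rightarrow> real \<Rightarrow> real \<Rightarrow>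
    (real^'n \<Rightarrow> real) \<Rightarrow> real \<Rightarrow> real \<Rightarrow> (real^'n \<Rightarrow> real \<Rightarrow> real) \<Rightarrow> (real^'n \<Rightarrow> real) \<Rightarrow> real" where
  "phi1 p s \<Omega> a b \<theta> \<alpha> c lam q F u =
     a * X0norm p s u powr p + Lnorm \<Omega> p u powr p + b * X0norm p s u powr (p * \<theta>)
     - (LINT x:\<Omega>|lebesgue. c x * (max (u x) 0) powr (1 - \<alpha>))
     - lam * q * (LINT x:\<Omega>|lebesgue. F x (max (u x) 0))"

definition phi2 :: "real \<Rightarrow> real \<Rightarrow> (real^'n) set \<Rightarrow> real \<Rightarrow> real \<Rightarrow> real \<Rightarrow> real \<Rightarrow>
    (real^'n \<Rightarrow> real) \<Rightarrow> real \<Rightarrow> real \<Rightarrow> (real^'n \<Rightarrow> real \<Rightarrow> real) \<Rightarrow> (real^'n \<Rightarrow> real) \<Rightarrow> real" where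
  "phi2 p s \<Omega> a b \<theta> \<alpha> c lam q F u =
     (p - 1) * (a * X0norm p s u powr p + Lnorm \<Omega> p u powr p)
     + b * (p * \<theta> - 1) * X0norm p s u powr (p * \<theta>)
     + \<alpha> * (LINT x:\<Omega>|lebesgue. c x * (max (u x) 0) powr (1 - \<alpha>))
     - lam * q * (q - 1) * (LINT x:\<Omega>|lebesgue. F x (max (u x) 0))"

definition Nehari0 :: "real \<Rightarrow> real \<Rightarrow> (real^'n) set \<Rightarrow> real \<Rightarrow> real \<Rightarrow> real \<Rightarrow> real \<Rightarrow>
    (real^'n \<Rightarrow> real) \<Rightarrow> real \<Rightarrow> real \<Rightarrow> (real^'n \<Rightarrow> real \<Rightarrow> real) \<Rightarrow> (real^'n \<Rightarrow> real) set" where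
  "Nehari0 p s \<Omega> a b \<theta> \<alpha> c lam q F =
     {u \<in> X0 p s \<Omega>. phi1 p s \<Omega> a b \<theta> \<alpha> c lam q F u = 0 \<and> phi2 p s \<Omega> a b \<theta> \<alpha> c lam q F u = 0}"

end

theory Submission
  imports Defs
begin

lemma AE_lebesgue_fst:
  assumes "AE x in (lebesgue::('a::euclidean_space) measure). P x"
  shows "AE z in (lebesgue :: ('a \<times> 'a) measure). P (fst z)"
proof -
  have "AE x in (lborel::'a measure). P x" using assms by (simp add: AE_completion_iff)
  then obtain N where N: "{x \<in> space lborel. \<not> P x} \<subseteq> N" "N \<in> null_sets (lborel::'a measure)"
    by (auto elim!: AE_E simp: null_sets_def)
  have "N \<times> UNIV \<in> null_sets (lborel \<Otimes>\<^sub>M (lborel::'a measure))"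
    using N(2) by (intro lborel.times_in_null_sets1) auto
  hence "N \<times> UNIV \<in> null_sets (lborel :: ('a \<times> 'a) measure)" by (simp add: lborel_prod)
  hence "AE z in (lborel :: ('a \<times> 'a) measure). P (fst z)"
    by (rule AE_I') (use N(1) in auto)
  thus ?thesis by (rule AE_completion)
qed

lemma AE_lebesgue_snd:
  assumes "AE x in (lebesgue::('a::euclidean_space) measure). P x"
  shows "AE z in (lebesgue :: ('a \<times> 'a) measure). P (snd z)"
proof -
  have "AE x in (lborel::'a measure). P x" using assms by (simp add: AE_completion_iff)
  then obtain N where N: "{x \<in> space lborel. \<not> P x} \<subseteq> N" "N \<in> null_sets (lborel::'a measure)"
    by (auto elim!: AE_E simp: null_sets_def)
  have "UNIV \<times> N \<in> null_sets (lborel \<Otimes>\<^sub>M (lborel::'a measure))"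
    using N(2) by (intro lborel.times_in_null_sets2) auto
  hence "UNIV \<times> N \<in> null_sets (lborel :: ('a \<times> 'a) measure)" by (simp add: lborel_prod)
  hence "AE z in (lborel :: ('a \<times> 'a) measure). P (snd z)"
    by (rule AE_I') (use N(1) in auto)
  thus ?thesis by (rule AE_completion)
qed

lemma powr_sum_le:
  fixes a b p :: real
  assumes "0 \<le> a" "0 \<le> b" "0 < p"
  shows "(a + b) powr p \<le> 2 powr p * (a powr p + b powr p)"
proof -
  have "(a + b) powr p \<le> (2 * max a b) powr p"
    using assms by (intro powr_mono2) auto
  also have "\<dots> = 2 powr p * max a b powr p"
    using assms by (simp add: powr_mult)
  also have "max a b powr p \<le> a powr p + b powr p"
    using assms by (cases "a \<le> b") (auto simp: max_def)
  finally show ?thesis by (simp add: mult_left_mono)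
qed

lemma powr_interp:
  fixes t p q r :: real
  assumes "0 \<le> t" "p \<le> q" "q \<le> r"
  shows "t powr q \<le> t powr p + t powr r"
proof (cases "t \<le> 1")
  case True
  hence "t powr q \<le> t powr p" by (intro powr_mono') (use assms in auto)
  thus ?thesis using powr_ge_zero[of t r] by linarith
next
  case False
  hence "t powr q \<le> t powr r" by (intro powr_mono) (use assms in auto)
  thus ?thesis using powr_ge_zero[of t p] by linarith
qed

lemma powr_young_split:
  fixes t T p P :: real
  assumes "0 \<le> t" "0 < T" "0 \<le> p" "p \<le> P"
  shows "t powr p \<le> T powr p + T powr (p - P) * t powr P"
proof (cases "t \<le> T")
  case True
  hence "t powr p \<le> T powr p" using assms by (intro powr_mono2) auto
  moreover have "0 \<le> T powr (p - P) * t powr P" by simp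
  ultimately show ?thesis by linarith
next
  case False
  hence t: "t > 0" "T \<le> t" using assms by auto
  have "t powr p = t powr (p - P) * t powr P" using t by (simp add: powr_add[symmetric])
  also have "\<dots> \<le> T powr (p - P) * t powr P"
    using t assms by (intro mult_right_mono powr_mono2') auto
  finally show ?thesis using powr_ge_zero[of T p] by linarith
qed

lemma alg_opt:
  fixes h Q P c1 c2 \<sigma> d :: real
  assumes h: "0 \<le> h" and Q: "0 \<le> Q" and P: "0 < P" and c: "0 < c1" "0 < c2"
    and sd: "0 < \<sigma>" "\<sigma> < d"
    and H: "\<And>r. 0 < r \<Longrightarrow> h \<le> c1 * r powr \<sigma> * Q + c2 * P * r powr (\<sigma> - d)"
  shows "h powr (d / (d - \<sigma>)) \<le> 2 * c1 * (2 * c2 * P) powr (\<sigma> / (d - \<sigma>)) * Q"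
proof (cases "h = 0")
  case True
  thus ?thesis using sd c Q P by simp
next
  case False
  hence hp: "h > 0" using h by auto
  define r where "r = (2 * c2 * P / h) powr (1 / (d - \<sigma>))"
  have r: "r > 0" unfolding r_def using hp c P by simp
  have "r powr (\<sigma> - d) = (2 * c2 * P / h) powr ((1 / (d - \<sigma>)) * (\<sigma> - d))"
    unfolding r_def by (simp add: powr_powr)
  also have "(1 / (d - \<sigma>)) * (\<sigma> - d) = -1" using sd by (simp add: field_simps)
  finally have r1: "r powr (\<sigma> - d) = h / (2 * c2 * P)"
    using hp c P by (simp add: powr_minus_divide)
  have r2: "r powr \<sigma> = (2 * c2 * P) powr (\<sigma> / (d - \<sigma>)) * h powr (- (\<sigma> / (d - \<sigma>)))"
  proof -
    have "r powr \<sigma> = (2 * c2 * P / h) powr (\<sigma> / (d - \<sigma>))"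
      unfolding r_def by (simp add: powr_powr)
    also have "\<dots> = (2 * c2 * P) powr (\<sigma> / (d - \<sigma>)) / h powr (\<sigma> / (d - \<sigma>))"
      by (rule powr_divide)
    finally show ?thesis by (simp add: powr_minus divide_inverse)
  qed
  have "h \<le> c1 * r powr \<sigma> * Q + c2 * P * (h / (2 * c2 * P))" using H[OF r] r1 by simp
  also have "c2 * P * (h / (2 * c2 * P)) = h / 2" using c P by simp
  finally have "h \<le> 2 * (c1 * r powr \<sigma> * Q)" by linarith
  hence "h \<le> 2 * c1 * Q * r powr \<sigma>" by (simp add: ac_simps)
  hence "h * h powr (\<sigma> / (d - \<sigma>)) \<le> 2 * c1 * Q * r powr \<sigma> * h powr (\<sigma> / (d - \<sigma>))"
    by (intro mult_right_mono) auto
  also have "\<dots> = 2 * c1 * Q * (2 * c2 * P) powr (\<sigma> / (d - \<sigma>))"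
    using hp by (simp add: r2 powr_minus field_simps)
  also have "h * h powr (\<sigma> / (d - \<sigma>)) = h powr (d / (d - \<sigma>))"
  proof -
    have "1 + \<sigma> / (d - \<sigma>) = d / (d - \<sigma>)" using sd by (simp add: field_simps)
    hence "h powr (d / (d - \<sigma>)) = h powr (1 + \<sigma> / (d - \<sigma>))" by simp
    also have "\<dots> = h powr 1 * h powr (\<sigma> / (d - \<sigma>))" by (rule powr_add)
    also have "h powr 1 = h" using hp by simp
    finally show ?thesis by simp
  qed
  finally show ?thesis by (simp add: ac_simps)
qed

lemma ennreal_combine_helper:
  fixes c a b :: real
  assumes "0 \<le> c" "0 \<le> a" "0 \<le> b"
  shows "ennreal c * ennreal a + ennreal c * ennreal b = ennreal (c * a + c * b)"
  using assms by (simp add: ennreal_mult ennreal_plus)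

lemma ennreal_le_combine:
  fixes c a b :: real
  assumes "X \<le> ennreal c * I1 + ennreal c * I2" "I1 \<le> ennreal a" "I2 \<le> ennreal b"
    "0 \<le> c" "0 \<le> a" "0 \<le> b" "0 \<le> h"
    "X = ennreal h"
  shows "h \<le> c * a + c * b"
proof -
  have "X \<le> ennreal c * ennreal a + ennreal c * ennreal b"
    by (rule order_trans[OF assms(1) add_mono[OF mult_left_mono[OF assms(2) zero_le] mult_left_mono[OF assms(3) zero_le]]])
  also have "\<dots> = ennreal (c * a + c * b)" using assms by (rule_tac ennreal_combine_helper) auto
  finally have "ennreal h \<le> ennreal (c * a + c * b)" using assms(8) by (simp only:)
  moreover have nn: "0 \<le> c * a + c * b" using assms by simp
  ultimately show ?thesis using ennreal_le_iff[OF nn, of h] by blast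
qed

lemma ennreal_le_mult_helper: "a \<le> c * b \<Longrightarrow> 0 \<le> c \<Longrightarrow> 0 \<le> b \<Longrightarrow> ennreal a \<le> ennreal c * ennreal b"
proof -
  assume h: "a \<le> c * b" "0 \<le> c" "0 \<le> b"
  have "ennreal a \<le> ennreal (c * b)" using h(1) by (rule ennreal_leI)
  also have "ennreal (c * b) = ennreal c * ennreal b" using h(2,3) by (rule ennreal_mult)
  finally show ?thesis .
qed

lemma pointwise_ball:
  fixes w :: "'a::euclidean_space \<Rightarrow> real" and x :: 'a and p \<sigma> S Q r :: real
  defines "d \<equiv> real DIM('a)"
  defines "e \<equiv> d / (d - \<sigma>)"
  defines "\<omega> \<equiv> unit_ball_vol d"
  assumes wm[measurable]: "w \<in> borel_measurable lborel"
    and p: "1 < p" and sd: "0 < \<sigma>" "\<sigma> < d"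
    and S: "(\<integral>\<^sup>+ y. ennreal (\<bar>w y\<bar> powr (p * e)) \<partial>lborel) = ennreal S" "0 < S"
    and r: "0 < r"
    and Q: "(\<integral>\<^sup>+ y. ennreal (\<bar>w x - w y\<bar> powr p / norm (x - y) powr (d + \<sigma>)) \<partial>lborel) = ennreal Q" "0 \<le> Q"
  shows "\<bar>w x\<bar> powr p \<le> 2 powr p / \<omega> * r powr \<sigma> * Q + 2 powr (p + 1) * (S / \<omega>) powr (1 / e) * r powr (\<sigma> - d)"
proof -
  define B where "B = ball x r"
  have B_meas[measurable]: "B \<in> sets lborel" unfolding B_def by simp
  define m where "m = \<omega> * r powr d"
  have \<omega>: "\<omega> > 0" unfolding \<omega>_def d_def by simp
  have m: "m > 0" unfolding m_def using \<omega> r by simp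
  have mB: "emeasure lborel B = ennreal m"
    unfolding B_def m_def \<omega>_def d_def using r by (simp add: emeasure_ball powr_realpow)
  have e1: "e \<ge> 1" unfolding e_def using sd by simp
  have pe: "p \<le> p * e" using e1 p by simp
  define T where "T = (S / m) powr (1 / (p * e))"
  have T: "T > 0" unfolding T_def using S m by simp
  have Tpe: "T powr (p * e) = S / m"
    unfolding T_def using S m p e1 by (simp add: powr_powr)
  define f where "f y = \<bar>w x - w y\<bar> powr p / norm (x - y) powr (d + \<sigma>)" for y
  have f0: "f y \<ge> 0" for y unfolding f_def by simp
  have F1: "(\<integral>\<^sup>+ y. ennreal (indicator B y * \<bar>w x - w y\<bar> powr p) \<partial>lborel) \<le> ennreal (r powr (d + \<sigma>) * Q)"
  proof -
    have "(\<integral>\<^sup>+ y. ennreal (indicator B y * \<bar>w x - w y\<bar> powr p) \<partial>lborel)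
        \<le> (\<integral>\<^sup>+ y. ennreal (r powr (d + \<sigma>)) * ennreal (f y) \<partial>lborel)"
    proof (intro nn_integral_mono)
      fix y
      have "indicator B y * \<bar>w x - w y\<bar> powr p \<le> r powr (d + \<sigma>) * f y"
      proof (cases "y \<in> B \<and> y \<noteq> x")
        case True
        hence ny: "0 < norm (x - y)" "norm (x - y) < r" unfolding B_def by (auto simp: dist_norm)
        have "\<bar>w x - w y\<bar> powr p = f y * norm (x - y) powr (d + \<sigma>)"
          unfolding f_def using ny by simp
        also have "\<dots> \<le> f y * r powr (d + \<sigma>)"
          using ny sd f0 by (intro mult_left_mono powr_mono2) auto
        finally show ?thesis using True by (simp add: ac_simps)
      next
        case False
        thus ?thesis using f0[of y] p by (auto simp: indicator_def)
      qed
      thus "ennreal (indicator B y * \<bar>w x - w y\<bar> powr p) \<le> ennreal (r powr (d + \<sigma>)) * ennreal (f y)"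
        using f0[of y] by (intro ennreal_le_mult_helper) auto
    qed
    also have "\<dots> = ennreal (r powr (d + \<sigma>)) * (\<integral>\<^sup>+ y. ennreal (f y) \<partial>lborel)"
      unfolding f_def by (rule nn_integral_cmult) measurable
    also have "\<dots> = ennreal (r powr (d + \<sigma>)) * ennreal Q" using Q unfolding f_def by simp
    also have "\<dots> = ennreal (r powr (d + \<sigma>) * Q)" using Q(2) by (simp add: ennreal_mult)
    finally show ?thesis .
  qed
  have F2: "(\<integral>\<^sup>+ y. ennreal (indicator B y * \<bar>w y\<bar> powr p) \<partial>lborel) \<le> ennreal (T powr p * m + T powr (p - p * e) * S)"
  proof -
    have "(\<integral>\<^sup>+ y. ennreal (indicator B y * \<bar>w y\<bar> powr p) \<partial>lborel)
        \<le> (\<integral>\<^sup>+ y. ennreal (T powr p) * indicator B y + ennreal (T powr (p - p * e)) * ennreal (\<bar>w y\<bar> powr (p * e)) \<partial>lborel)"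
    proof (intro nn_integral_mono)
      fix y
      have "indicator B y * \<bar>w y\<bar> powr p \<le> T powr p * indicator B y + T powr (p - p * e) * \<bar>w y\<bar> powr (p * e)"
        using powr_young_split[of "\<bar>w y\<bar>" T p "p * e"] T p pe
        by (auto simp: indicator_def)
      hence "ennreal (indicator B y * \<bar>w y\<bar> powr p) \<le> ennreal (T powr p * indicator B y + T powr (p - p * e) * \<bar>w y\<bar> powr (p * e))"
        by (rule ennreal_leI)
      also have "\<dots> = ennreal (T powr p) * indicator B y + ennreal (T powr (p - p * e)) * ennreal (\<bar>w y\<bar> powr (p * e))"
        by (cases "y \<in> B") (simp_all del: ennreal_plus add: ennreal_plus[symmetric] ennreal_mult[symmetric])
      finally show "ennreal (indicator B y * \<bar>w y\<bar> powr p) \<le> ennreal (T powr p) * indicator B y + ennreal (T powr (p - p * e)) * ennreal (\<bar>w y\<bar> powr (p * e))" .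
    qed
    also have "\<dots> = (\<integral>\<^sup>+ y. ennreal (T powr p) * indicator B y \<partial>lborel) + (\<integral>\<^sup>+ y. ennreal (T powr (p - p * e)) * ennreal (\<bar>w y\<bar> powr (p * e)) \<partial>lborel)"
      by (rule nn_integral_add) measurable
    also have "\<dots> = ennreal (T powr p) * ennreal m + ennreal (T powr (p - p * e)) * ennreal S"
    proof -
      have i1: "(\<integral>\<^sup>+ y. ennreal (T powr p) * indicator B y \<partial>lborel) = ennreal (T powr p) * emeasure lborel B"
        by (rule nn_integral_cmult_indicator) (use B_meas in simp)
      have i2: "(\<integral>\<^sup>+ y. ennreal (T powr (p - p * e)) * ennreal (\<bar>w y\<bar> powr (p * e)) \<partial>lborel) = ennreal (T powr (p - p * e)) * (\<integral>\<^sup>+ y. ennreal (\<bar>w y\<bar> powr (p * e)) \<partial>lborel)"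
        by (rule nn_integral_cmult) measurable
      show ?thesis by (simp only: i1 i2 mB S(1))
    qed
    also have "\<dots> = ennreal (T powr p * m + T powr (p - p * e) * S)"
      using S T m by (simp add: ennreal_mult ennreal_plus)
    finally show ?thesis .
  qed
  have F3: "ennreal (m * \<bar>w x\<bar> powr p) \<le> ennreal (2 powr p) * (\<integral>\<^sup>+ y. ennreal (indicator B y * \<bar>w x - w y\<bar> powr p) \<partial>lborel)
      + ennreal (2 powr p) * (\<integral>\<^sup>+ y. ennreal (indicator B y * \<bar>w y\<bar> powr p) \<partial>lborel)"
  proof -
    have "ennreal (m * \<bar>w x\<bar> powr p) = (\<integral>\<^sup>+ y. ennreal (\<bar>w x\<bar> powr p) * indicator B y \<partial>lborel)"
      using mB m by (subst nn_integral_cmult_indicator) (use B_meas in \<open>simp_all add: ennreal_mult ac_simps\<close>)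
    also have "\<dots> \<le> (\<integral>\<^sup>+ y. ennreal (2 powr p) * ennreal (indicator B y * \<bar>w x - w y\<bar> powr p) + ennreal (2 powr p) * ennreal (indicator B y * \<bar>w y\<bar> powr p) \<partial>lborel)"
    proof (intro nn_integral_mono)
      fix y
      have "\<bar>w x\<bar> powr p \<le> (\<bar>w x - w y\<bar> + \<bar>w y\<bar>) powr p"
        using p by (intro powr_mono2) auto
      also have "\<dots> \<le> 2 powr p * (\<bar>w x - w y\<bar> powr p + \<bar>w y\<bar> powr p)"
        using p by (intro powr_sum_le) auto
      finally have "\<bar>w x\<bar> powr p * indicator B y \<le> 2 powr p * (indicator B y * \<bar>w x - w y\<bar> powr p) + 2 powr p * (indicator B y * \<bar>w y\<bar> powr p)"
        by (auto simp: indicator_def algebra_simps)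
      hence "ennreal (\<bar>w x\<bar> powr p * indicator B y) \<le> ennreal (2 powr p * (indicator B y * \<bar>w x - w y\<bar> powr p) + 2 powr p * (indicator B y * \<bar>w y\<bar> powr p))"
        by (rule ennreal_leI)
      thus "ennreal (\<bar>w x\<bar> powr p) * indicator B y \<le> ennreal (2 powr p) * ennreal (indicator B y * \<bar>w x - w y\<bar> powr p) + ennreal (2 powr p) * ennreal (indicator B y * \<bar>w y\<bar> powr p)"
        by (cases "y \<in> B") (simp_all del: ennreal_plus add: ennreal_plus[symmetric] ennreal_mult[symmetric])
    qed
    also have "\<dots> = (\<integral>\<^sup>+ y. ennreal (2 powr p) * ennreal (indicator B y * \<bar>w x - w y\<bar> powr p) \<partial>lborel)
      + (\<integral>\<^sup>+ y. ennreal (2 powr p) * ennreal (indicator B y * \<bar>w y\<bar> powr p) \<partial>lborel)"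
      by (rule nn_integral_add) measurable
    also have "\<dots> = ennreal (2 powr p) * (\<integral>\<^sup>+ y. ennreal (indicator B y * \<bar>w x - w y\<bar> powr p) \<partial>lborel)
      + ennreal (2 powr p) * (\<integral>\<^sup>+ y. ennreal (indicator B y * \<bar>w y\<bar> powr p) \<partial>lborel)"
    proof -
      have i1: "(\<integral>\<^sup>+ y. ennreal (2 powr p) * ennreal (indicator B y * \<bar>w x - w y\<bar> powr p) \<partial>lborel)
         = ennreal (2 powr p) * (\<integral>\<^sup>+ y. ennreal (indicator B y * \<bar>w x - w y\<bar> powr p) \<partial>lborel)"
        by (rule nn_integral_cmult) measurable
      have i2: "(\<integral>\<^sup>+ y. ennreal (2 powr p) * ennreal (indicator B y * \<bar>w y\<bar> powr p) \<partial>lborel)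
         = ennreal (2 powr p) * (\<integral>\<^sup>+ y. ennreal (indicator B y * \<bar>w y\<bar> powr p) \<partial>lborel)"
        by (rule nn_integral_cmult) measurable
      show ?thesis by (simp only: i1 i2)
    qed
    finally show ?thesis .
  qed
  have main: "m * \<bar>w x\<bar> powr p \<le> 2 powr p * (r powr (d + \<sigma>) * Q) + 2 powr p * (T powr p * m + T powr (p - p * e) * S)"
    by (rule ennreal_le_combine[OF F3 F1 F2]) (use Q(2) S(2) T m in auto)
  have eqT: "T powr (p - p * e) * S = T powr p * m"
  proof -
    have "T powr (p - p * e) = T powr p / T powr (p * e)" using T by (simp add: powr_diff)
    thus ?thesis using Tpe m S(2) by simp
  qed
  define h where "h = \<bar>w x\<bar> powr p"
  define R where "R = r powr (d + \<sigma>)"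
  define Tp where "Tp = T powr p"
  have main2: "m * h \<le> 2 powr p * (R * Q) + 2 powr p * (Tp * m + Tp * m)"
    using main eqT unfolding h_def R_def Tp_def by simp
  have "2 powr p * (Tp * m + Tp * m) = m * (2 * 2 powr p * Tp)" by (simp add: distrib_left)
  with main2 have main3: "m * h \<le> 2 powr p * (R * Q) + m * (2 * 2 powr p * Tp)" by linarith
  have step1: "h \<le> (2 powr p * (R * Q) + m * (2 * 2 powr p * Tp)) / m"
    using main3 m by (simp add: pos_le_divide_eq mult.commute)
  have step2: "(2 powr p * (R * Q) + m * (2 * 2 powr p * Tp)) / m = 2 powr p * (R / m) * Q + 2 * 2 powr p * Tp"
    using m by (simp add: add_divide_distrib)
  have step3: "R / m = r powr \<sigma> / \<omega>"
    unfolding m_def R_def using r \<omega> by (simp add: powr_add)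
  have step4: "Tp = (S / \<omega>) powr (1 / e) * r powr (\<sigma> - d)"
  proof -
    have a1: "T powr p = (S / m) powr (1 / e)"
      unfolding T_def using p e1 by (simp add: powr_powr)
    have a2: "(S / m) powr (1 / e) = (S / \<omega>) powr (1 / e) / (r powr d) powr (1 / e)"
      unfolding m_def using \<omega> r by (simp add: powr_divide powr_mult)
    have a3: "(r powr d) powr (1 / e) = r powr (d - \<sigma>)"
      unfolding e_def using sd by (simp add: powr_powr)
    have a4: "(S / \<omega>) powr (1 / e) / r powr (d - \<sigma>) = (S / \<omega>) powr (1 / e) * r powr (\<sigma> - d)"
      using r by (simp add: powr_diff divide_inverse powr_minus)
    show ?thesis unfolding Tp_def a1 a2 a3 a4 ..
  qed
  have step5: "2 * 2 powr p = 2 powr (p + 1)" by (simp add: powr_add)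
  have "h \<le> 2 powr p * (r powr \<sigma> / \<omega>) * Q + 2 powr (p + 1) * ((S / \<omega>) powr (1 / e) * r powr (\<sigma> - d))"
  proof -
    have "h \<le> 2 powr p * (R / m) * Q + 2 * 2 powr p * Tp" using step1 unfolding step2 .
    thus ?thesis unfolding step3 step4 step5 .
  qed
  thus ?thesis unfolding h_def by (simp add: ac_simps)
qed

lemma sobolev_bounded:
  fixes w :: "'a::euclidean_space \<Rightarrow> real" and p \<sigma> S G :: real
  defines "d \<equiv> real DIM('a)"
  defines "e \<equiv> d / (d - \<sigma>)"
  defines "\<omega> \<equiv> unit_ball_vol d"
  defines "K0 \<equiv> 2 * (2 powr p / \<omega>) * (2 * 2 powr (p + 1)) powr (\<sigma> / (d - \<sigma>)) * \<omega> powr (- (\<sigma> / d))"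
  assumes wm[measurable]: "w \<in> borel_measurable lborel"
    and p: "1 < p" and sd: "0 < \<sigma>" "\<sigma> < d"
    and S: "(\<integral>\<^sup>+ y. ennreal (\<bar>w y\<bar> powr (p * e)) \<partial>lborel) = ennreal S" "0 \<le> S"
    and G: "(\<integral>\<^sup>+ x. (\<integral>\<^sup>+ y. ennreal (\<bar>w x - w y\<bar> powr p / norm (x - y) powr (d + \<sigma>)) \<partial>lborel) \<partial>lborel) = ennreal G" "0 \<le> G"
  shows "S \<le> (K0 * G) powr e"
proof (cases "S = 0")
  case True
  thus ?thesis by simp
next
  case False
  hence Sp: "S > 0" using S(2) by simp
  have \<omega>: "\<omega> > 0" unfolding \<omega>_def d_def by simp
  define c1 where "c1 = 2 powr p / \<omega>"
  define c2 where "c2 = 2 powr (p + 1)"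
  define P where "P = (S / \<omega>) powr (1 / e)"
  have c1: "c1 > 0" unfolding c1_def using \<omega> by simp
  have c2: "c2 > 0" unfolding c2_def by simp
  have P: "P > 0" unfolding P_def using Sp \<omega> by simp
  define A where "A = 2 * c1 * (2 * c2 * P) powr (\<sigma> / (d - \<sigma>))"
  have A: "A > 0" unfolding A_def using c1 c2 P by simp
  have A_eq: "A = K0 * S powr (\<sigma> / d)"
  proof -
    have "(2 * c2 * P) powr (\<sigma> / (d - \<sigma>)) = (2 * c2) powr (\<sigma> / (d - \<sigma>)) * P powr (\<sigma> / (d - \<sigma>))"
      using c2 P by (simp add: powr_mult)
    also have "P powr (\<sigma> / (d - \<sigma>)) = (S / \<omega>) powr ((1 / e) * (\<sigma> / (d - \<sigma>)))"
      unfolding P_def by (simp add: powr_powr)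
    also have "(1 / e) * (\<sigma> / (d - \<sigma>)) = \<sigma> / d"
      unfolding e_def using sd by (simp add: field_simps)
    also have "(S / \<omega>) powr (\<sigma> / d) = S powr (\<sigma> / d) * \<omega> powr (- (\<sigma> / d))"
    proof -
      have "(S / \<omega>) powr (\<sigma> / d) = S powr (\<sigma> / d) / \<omega> powr (\<sigma> / d)" by (rule powr_divide)
      thus ?thesis by (simp add: powr_minus divide_inverse)
    qed
    finally have "(2 * c2 * P) powr (\<sigma> / (d - \<sigma>)) = (2 * c2) powr (\<sigma> / (d - \<sigma>)) * (S powr (\<sigma> / d) * \<omega> powr (- (\<sigma> / d)))" .
    thus ?thesis unfolding A_def K0_def c1_def c2_def by (simp add: ac_simps)
  qed
  define Qf where "Qf x = (\<integral>\<^sup>+ y. ennreal (\<bar>w x - w y\<bar> powr p / norm (x - y) powr (d + \<sigma>)) \<partial>lborel)" for x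
  have Qf_meas: "Qf \<in> borel_measurable lborel"
    unfolding Qf_def by measurable
  have pw: "ennreal (\<bar>w x\<bar> powr (p * e)) \<le> ennreal A * Qf x" for x
  proof (cases "Qf x" rule: ennreal_cases)
    case top
    thus ?thesis using A by simp
  next
    case (real Q)
    have H: "\<bar>w x\<bar> powr p \<le> c1 * r powr \<sigma> * Q + c2 * P * r powr (\<sigma> - d)" if r: "0 < r" for r
      unfolding c1_def c2_def P_def \<omega>_def d_def e_def
      using pointwise_ball[OF wm p sd[unfolded d_def], of S r x Q] S Sp r real
      unfolding Qf_def d_def e_def by simp
    have "(\<bar>w x\<bar> powr p) powr (d / (d - \<sigma>)) \<le> 2 * c1 * (2 * c2 * P) powr (\<sigma> / (d - \<sigma>)) * Q"
      by (rule alg_opt[OF _ _ P c1 c2 sd H]) (use real in auto)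
    hence "\<bar>w x\<bar> powr (p * e) \<le> A * Q"
      unfolding A_def e_def by (simp add: powr_powr)
    hence "ennreal (\<bar>w x\<bar> powr (p * e)) \<le> ennreal A * ennreal Q"
      using A real by (intro ennreal_le_mult_helper) auto
    thus ?thesis using real by simp
  qed
  have "ennreal S \<le> (\<integral>\<^sup>+ x. ennreal A * Qf x \<partial>lborel)"
    unfolding S(1)[symmetric] by (intro nn_integral_mono pw)
  also have "\<dots> = ennreal A * (\<integral>\<^sup>+ x. Qf x \<partial>lborel)"
    by (rule nn_integral_cmult[OF Qf_meas])
  also have "(\<integral>\<^sup>+ x. Qf x \<partial>lborel) = ennreal G"
    unfolding Qf_def using G(1) by simp
  also have "ennreal A * ennreal G = ennreal (A * G)"
    using A G(2) by (simp add: ennreal_mult)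
  finally have SAG: "S \<le> A * G"
    using A G(2) by (subst (asm) ennreal_le_iff) auto
  have Ssplit: "S = S powr (\<sigma> / d) * S powr (1 - \<sigma> / d)"
    using Sp by (simp add: powr_add[symmetric])
  have "S powr (\<sigma> / d) * S powr (1 - \<sigma> / d) \<le> S powr (\<sigma> / d) * (K0 * G)"
    using SAG A_eq Ssplit by (simp add: ac_simps)
  hence S1: "S powr (1 - \<sigma> / d) \<le> K0 * G"
    using Sp by simp
  have "S = (S powr (1 - \<sigma> / d)) powr e"
  proof -
    have "(1 - \<sigma> / d) * e = 1" unfolding e_def using sd by (simp add: field_simps)
    thus ?thesis using Sp by (simp add: powr_powr)
  qed
  also have "\<dots> \<le> (K0 * G) powr e"
    using S1 sd unfolding e_def by (intro powr_mono2) auto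
  finally show ?thesis .
qed

lemma clamp_lip: "\<bar>max (- N) (min N a) - max (- N) (min N b)\<bar> \<le> \<bar>a - b\<bar>" for N a b :: real
  unfolding max_def min_def by (auto simp: abs_if)

lemma clamp_abs: "0 \<le> N \<Longrightarrow> \<bar>max (- N) (min N a)\<bar> = min N \<bar>a\<bar>" for N a :: real
  by (simp add: max_def min_def abs_if)

lemma SUP_min_powr:
  fixes a q :: real assumes "0 \<le> a" "0 < q"
  shows "(SUP N::nat. ennreal ((min (real N) a) powr q)) = ennreal (a powr q)"
proof (rule antisym)
  show "(SUP N::nat. ennreal ((min (real N) a) powr q)) \<le> ennreal (a powr q)"
    using assms by (intro SUP_least ennreal_leI powr_mono2) auto
  have "a \<le> real (nat \<lceil>a\<rceil>)" by linarith
  hence "min (real (nat \<lceil>a\<rceil>)) a = a" by simp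
  thus "ennreal (a powr q) \<le> (SUP N::nat. ennreal ((min (real N) a) powr q))"
    by (intro SUP_upper2[of "nat \<lceil>a\<rceil>"]) auto
qed

lemma gagliardo_fubini:
  fixes v :: "real^'n \<Rightarrow> real"
  assumes [measurable]: "v \<in> borel_measurable lborel"
  shows "gagliardo_int p s v = (\<integral>\<^sup>+ x. (\<integral>\<^sup>+ y. ennreal (\<bar>v x - v y\<bar> powr p / norm (x - y) powr (real CARD('n) + p * s)) \<partial>lborel) \<partial>lborel)"
proof -
  define F where "F z = ennreal (\<bar>v (fst z) - v (snd z)\<bar> powr p / norm (fst z - snd z) powr (real CARD('n) + p * s))" for z :: "(real^'n) \<times> (real^'n)"
  have Fm: "F \<in> borel_measurable (lborel \<Otimes>\<^sub>M lborel)" unfolding F_def by measurable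
  have "gagliardo_int p s v = integral\<^sup>N (lborel \<Otimes>\<^sub>M lborel) F"
    unfolding gagliardo_int_def nn_integral_completion lborel_prod F_def ..
  also have "\<dots> = (\<integral>\<^sup>+ x. (\<integral>\<^sup>+ y. F (x, y) \<partial>lborel) \<partial>lborel)"
    by (rule lborel.nn_integral_fst[OF Fm, symmetric])
  finally show ?thesis unfolding F_def by simp
qed

lemma sobolev_X0:
  fixes p s :: real
  assumes s: "0 < s" and p: "1 < p" and n: "p * s < real CARD('n)"
  defines "e \<equiv> real CARD('n) / (real CARD('n) - p * s)"
  shows "\<exists>K>0. \<forall>(u::real^'n \<Rightarrow> real) R. u \<in> borel_measurable lebesgue \<longrightarrow>
     (AE x in lebesgue. x \<notin> ball 0 R \<longrightarrow> u x = 0) \<longrightarrow> gagliardo_int p s u < \<infinity> \<longrightarrow>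
     (\<integral>\<^sup>+ x. ennreal (\<bar>u x\<bar> powr (p * e)) \<partial>lebesgue) \<le> ennreal (K * enn2real (gagliardo_int p s u) powr e)"
proof -
  define d where "d = real DIM(real^'n)"
  have dn: "d = real CARD('n)" unfolding d_def by simp
  define \<sigma> where "\<sigma> = p * s"
  have sd: "0 < \<sigma>" "\<sigma> < d" unfolding \<sigma>_def dn using s p n by auto
  define \<omega> where "\<omega> = unit_ball_vol d"
  have \<omega>: "\<omega> > 0" unfolding \<omega>_def d_def by simp
  define K0 where "K0 = 2 * (2 powr p / \<omega>) * (2 * 2 powr (p + 1)) powr (\<sigma> / (d - \<sigma>)) * \<omega> powr (- (\<sigma> / d))"
  have K0: "K0 > 0" unfolding K0_def using \<omega> by simp
  have e_eq: "e = d / (d - \<sigma>)" unfolding e_def dn \<sigma>_def ..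
  have e1: "e \<ge> 1" unfolding e_eq using sd by simp
  show ?thesis
  proof (intro exI[of _ "K0 powr e"] conjI allI impI)
    show "K0 powr e > 0" using K0 by simp
    fix u :: "real^'n \<Rightarrow> real" and R :: real
    assume um: "u \<in> borel_measurable lebesgue"
      and uR: "AE x in lebesgue. x \<notin> ball 0 R \<longrightarrow> u x = 0"
      and ug: "gagliardo_int p s u < \<infinity>"
    obtain v0 where v0m: "v0 \<in> borel_measurable lborel" and v0: "AE x in lborel. u x = v0 x"
      using completion_ex_borel_measurable_real[OF um] by blast
    define v where "v x = indicator (ball 0 R) x * v0 x" for x
    have ballm[measurable]: "ball (0::real^'n) R \<in> sets lborel" by simp
    note v0m[measurable]
    have vm[measurable]: "v \<in> borel_measurable lborel" unfolding v_def by measurable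
    have uv_borel: "AE x in lborel. u x = v x"
      using v0 uR[unfolded AE_completion_iff] by eventually_elim (auto simp: v_def indicator_def)
    hence uv: "AE x in lebesgue. u x = v x" by (rule AE_completion)
    have gv: "gagliardo_int p s u = gagliardo_int p s v"
    proof -
      have "AE z in (lebesgue :: ((real^'n) \<times> (real^'n)) measure). u (fst z) = v (fst z) \<and> u (snd z) = v (snd z)"
        using AE_lebesgue_fst[OF uv] AE_lebesgue_snd[OF uv] by eventually_elim auto
      thus ?thesis unfolding gagliardo_int_def
        by (intro nn_integral_cong_AE, elim AE_mp, intro AE_I2) simp
    qed
    define G where "G = enn2real (gagliardo_int p s u)"
    have G0: "G \<ge> 0" unfolding G_def by simp
    have Gv: "(\<integral>\<^sup>+ x. (\<integral>\<^sup>+ y. ennreal (\<bar>v x - v y\<bar> powr p / norm (x - y) powr (d + \<sigma>)) \<partial>lborel) \<partial>lborel) = ennreal G"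
      using ug unfolding G_def gv gagliardo_fubini[OF vm] dn \<sigma>_def by (simp add: ennreal_enn2real less_top[symmetric])
    define w where "w N x = max (- real N) (min (real N) (v x))" for N :: nat and x
    have wm[measurable]: "w N \<in> borel_measurable lborel" for N unfolding w_def by measurable
    have wabs: "\<bar>w N x\<bar> = min (real N) \<bar>v x\<bar>" for N x unfolding w_def by (rule clamp_abs) simp
    have bound_N: "(\<integral>\<^sup>+ x. ennreal (\<bar>w N x\<bar> powr (p * e)) \<partial>lborel) \<le> ennreal ((K0 * G) powr e)" for N
    proof -
      define SN where "SN = (\<integral>\<^sup>+ x. ennreal (\<bar>w N x\<bar> powr (p * e)) \<partial>lborel)"
      have "SN \<le> (\<integral>\<^sup>+ x. ennreal (real N powr (p * e)) * indicator (ball (0::real^'n) R) x \<partial>lborel)"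
        unfolding SN_def
      proof (intro nn_integral_mono)
        fix x
        show "ennreal (\<bar>w N x\<bar> powr (p * e)) \<le> ennreal (real N powr (p * e)) * indicator (ball 0 R) x"
        proof (cases "x \<in> ball 0 R")
          case True
          have "\<bar>w N x\<bar> powr (p * e) \<le> real N powr (p * e)"
            using p e1 by (intro powr_mono2) (auto simp: wabs)
          thus ?thesis using True by (simp add: ennreal_leI)
        next
          case False
          thus ?thesis by (simp add: w_def v_def)
        qed
      qed
      also have "\<dots> = ennreal (real N powr (p * e)) * emeasure lborel (ball (0::real^'n) R)"
        by (rule nn_integral_cmult_indicator) simp
      also have "\<dots> < \<infinity>"
        using emeasure_bounded_finite[of "ball (0::real^'n) R"] by (simp add: ennreal_mult_less_top)
      finally have SNfin: "SN < \<infinity>" .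
      define GN where "GN = (\<integral>\<^sup>+ x. (\<integral>\<^sup>+ y. ennreal (\<bar>w N x - w N y\<bar> powr p / norm (x - y) powr (d + \<sigma>)) \<partial>lborel) \<partial>lborel)"
      have GNle: "GN \<le> ennreal G"
        unfolding GN_def Gv[symmetric]
      proof (intro nn_integral_mono ennreal_leI divide_right_mono powr_mono2)
        fix x y
        show "\<bar>w N x - w N y\<bar> \<le> \<bar>v x - v y\<bar>" unfolding w_def by (rule clamp_lip)
      qed (use p in auto)
      hence GNfin: "GN < \<infinity>" by (simp add: le_less_trans)
      have SNeq: "(\<integral>\<^sup>+ x. ennreal (\<bar>w N x\<bar> powr (p * (d / (d - \<sigma>)))) \<partial>lborel) = ennreal (enn2real SN)"
        using SNfin unfolding SN_def e_eq by (simp add: ennreal_enn2real less_top[symmetric])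
      have GNeq: "(\<integral>\<^sup>+ x. (\<integral>\<^sup>+ y. ennreal (\<bar>w N x - w N y\<bar> powr p / norm (x - y) powr (d + \<sigma>)) \<partial>lborel) \<partial>lborel) = ennreal (enn2real GN)"
        using GNfin unfolding GN_def by (simp add: ennreal_enn2real less_top[symmetric])
      have "enn2real SN \<le> (K0 * enn2real GN) powr (d / (d - \<sigma>))"
        using sobolev_bounded[where S="enn2real SN" and G="enn2real GN", OF wm p sd[unfolded d_def]] SNeq GNeq
        unfolding K0_def \<omega>_def d_def by simp
      also have "\<dots> \<le> (K0 * G) powr (d / (d - \<sigma>))"
      proof (intro powr_mono2 mult_left_mono)
        show "enn2real GN \<le> G" using enn2real_mono[OF GNle] G0 by simp
      qed (use K0 sd in auto)
      finally have "enn2real SN \<le> (K0 * G) powr e" unfolding e_eq .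
      hence A: "ennreal (enn2real SN) \<le> ennreal ((K0 * G) powr e)" by (rule ennreal_leI)
      have B: "ennreal (enn2real SN) = SN" using SNfin by (simp add: less_top[symmetric])
      have "SN \<le> ennreal ((K0 * G) powr e)" using A unfolding B .
      thus ?thesis unfolding SN_def .
    qed
    have "(\<integral>\<^sup>+ x. ennreal (\<bar>u x\<bar> powr (p * e)) \<partial>lebesgue) = (\<integral>\<^sup>+ x. ennreal (\<bar>v x\<bar> powr (p * e)) \<partial>lborel)"
      unfolding nn_integral_completion using uv_borel
      by (intro nn_integral_cong_AE, elim AE_mp, intro AE_I2) simp
    also have "\<dots> = (\<integral>\<^sup>+ x. (SUP N. ennreal (\<bar>w N x\<bar> powr (p * e))) \<partial>lborel)"
      unfolding wabs using p e1 by (intro nn_integral_cong) (simp add: SUP_min_powr)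
    also have "\<dots> = (SUP N. (\<integral>\<^sup>+ x. ennreal (\<bar>w N x\<bar> powr (p * e)) \<partial>lborel))"
    proof (rule nn_integral_monotone_convergence_SUP)
      show "incseq (\<lambda>N x. ennreal (\<bar>w N x\<bar> powr (p * e)))"
        unfolding wabs using p e1
        by (intro incseq_SucI le_funI ennreal_leI powr_mono2) auto
    qed measurable
    also have "\<dots> \<le> ennreal ((K0 * G) powr e)"
      by (intro SUP_least bound_N)
    also have "(K0 * G) powr e = K0 powr e * G powr e"
      using K0 G0 by (simp add: powr_mult)
    finally show "(\<integral>\<^sup>+ x. ennreal (\<bar>u x\<bar> powr (p * e)) \<partial>lebesgue) \<le> ennreal (K0 powr e * enn2real (gagliardo_int p s u) powr e)"
      unfolding G_def .
  qed
qed

lemma final_alg: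
  fixes a b p \<theta> q \<alpha> \<gamma> lam M1 K e m\<Omega> g I C D J E \<epsilon> :: real
  defines "K1 \<equiv> (q - 1 + \<alpha>) * M1 * E * m\<Omega>"
  defines "K2 \<equiv> 2 * K1 / (q - p)"
  defines "K3 \<equiv> (K1 + (q - 1 + \<alpha>) * M1 * \<epsilon> * K2) / ((q - p * \<theta>) * b)"
  defines "Gmax \<equiv> K3 powr (1 / \<theta>)"
  defines "L \<equiv> q * (q - 1 + \<alpha>) * \<gamma>"
  defines "Z \<equiv> L * (K * Gmax powr (e - 1) + 1) + 1"
  assumes a: "0 < a" and b: "0 < b" and p: "1 < p" and \<theta>: "1 < \<theta>" and pq: "p * \<theta> < q"
    and \<alpha>: "0 < \<alpha>" "\<alpha> < 1" and \<gamma>: "0 \<le> \<gamma>" and lam: "0 < lam" and M1: "0 < M1" and K: "0 \<le> K"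
    and e: "1 < e" and m\<Omega>: "0 \<le> m\<Omega>" and g: "0 \<le> g" and I: "0 \<le> I" and E: "0 \<le> E" and \<epsilon>: "0 \<le> \<epsilon>"
    and \<epsilon>small: "(q - 1 + \<alpha>) * M1 * \<epsilon> \<le> (q - p) / 2"
    and E1: "a * g + I + b * g powr \<theta> - C - lam * q * D = 0"
    and E2: "(p - 1) * (a * g + I) + b * (p * \<theta> - 1) * g powr \<theta> + \<alpha> * C - lam * q * (q - 1) * D = 0"
    and HC: "C \<le> M1 * (E * m\<Omega> + \<epsilon> * I)"
    and HD: "D \<le> \<gamma> * (I + J)" and HJ: "J \<le> K * g powr e"
    and lamsmall: "lam < (p - 1 + \<alpha>) * min a (1 / 2) / Z"
  shows "g = 0"
proof (rule ccontr)
  assume "g \<noteq> 0"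
  hence gp: "g > 0" using g by simp
  have p1: "p * \<theta> > p" using p \<theta> by simp
  have qp: "q - p > 0" using pq p1 by simp
  have qpt: "q - p * \<theta> > 0" using pq by simp
  have q1: "q - 1 + \<alpha> > 0" using qp p \<alpha> by simp
  define A where "A = a * g + I"
  define B where "B = b * g powr \<theta>"
  have B0: "B \<ge> 0" unfolding B_def using b by simp
  have Aag: "A \<ge> a * g" "A \<ge> I" unfolding A_def using a g I by auto
  have Eq1: "(q - p) * A + (q - p * \<theta>) * B = (q - 1 + \<alpha>) * C"
  proof -
    have "(q - 1) * (a * g + I + b * g powr \<theta> - C - lam * q * D) - ((p - 1) * (a * g + I) + b * (p * \<theta> - 1) * g powr \<theta> + \<alpha> * C - lam * q * (q - 1) * D)
      = (q - p) * A + (q - p * \<theta>) * B - (q - 1 + \<alpha>) * C"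
      unfolding A_def B_def by (simp add: algebra_simps)
    thus ?thesis using E1 E2 by simp
  qed
  have Eq2: "(p - 1 + \<alpha>) * A + (p * \<theta> - 1 + \<alpha>) * B = lam * q * (q - 1 + \<alpha>) * D"
  proof -
    have "((p - 1) * (a * g + I) + b * (p * \<theta> - 1) * g powr \<theta> + \<alpha> * C - lam * q * (q - 1) * D) + \<alpha> * (a * g + I + b * g powr \<theta> - C - lam * q * D)
      = (p - 1 + \<alpha>) * A + (p * \<theta> - 1 + \<alpha>) * B - lam * q * (q - 1 + \<alpha>) * D"
      unfolding A_def B_def by (simp add: algebra_simps)
    thus ?thesis using E1 E2 by simp
  qed
  have HC1: "(q - 1 + \<alpha>) * C \<le> K1 + (q - 1 + \<alpha>) * M1 * \<epsilon> * I"
  proof -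
    have "(q - 1 + \<alpha>) * C \<le> (q - 1 + \<alpha>) * (M1 * (E * m\<Omega> + \<epsilon> * I))"
      using HC q1 by (intro mult_left_mono) auto
    thus ?thesis unfolding K1_def by (simp add: algebra_simps)
  qed
  have HC2: "(q - 1 + \<alpha>) * M1 * \<epsilon> * I \<le> (q - p) / 2 * I"
    using \<epsilon>small I by (intro mult_right_mono) auto
  have "(q - p) * I \<le> (q - p) * A" using Aag qp by (intro mult_left_mono) auto
  moreover have "(q - p * \<theta>) * B \<ge> 0" using qpt B0 by simp
  ultimately have "(q - p) * I \<le> K1 + (q - p) / 2 * I" using Eq1 HC1 HC2 by linarith
  moreover have "(q - p) * I = 2 * ((q - p) / 2 * I)" by simp
  ultimately have "(q - p) / 2 * I \<le> K1" by linarith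
  hence IK2: "I \<le> K2" unfolding K2_def using qp by (simp add: field_simps)
  have "(q - 1 + \<alpha>) * M1 * \<epsilon> * I \<le> (q - 1 + \<alpha>) * M1 * \<epsilon> * K2"
    using IK2 q1 M1 \<epsilon> by (intro mult_left_mono) auto
  hence "(q - p * \<theta>) * B \<le> K1 + (q - 1 + \<alpha>) * M1 * \<epsilon> * K2"
    using Eq1 HC1 Aag qp a g by (smt (verit) mult_nonneg_nonneg)
  hence "(q - p * \<theta>) * b * g powr \<theta> \<le> K1 + (q - 1 + \<alpha>) * M1 * \<epsilon> * K2"
    unfolding B_def by (simp add: ac_simps)
  hence gK3: "g powr \<theta> \<le> K3"
    unfolding K3_def using qpt b by (simp add: field_simps)
  have gGmax: "g \<le> Gmax"
  proof -
    have "g = (g powr \<theta>) powr (1 / \<theta>)" using gp \<theta> by (simp add: powr_powr)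
    also have "\<dots> \<le> K3 powr (1 / \<theta>)" using gK3 \<theta> by (intro powr_mono2) auto
    finally show ?thesis unfolding Gmax_def .
  qed
  have L0: "L \<ge> 0" unfolding L_def using q1 \<gamma> qp p by simp
  have Gm0: "Gmax powr (e - 1) \<ge> 0" by simp
  have Z: "Z > 0" unfolding Z_def using L0 K Gm0 by (simp add: add_nonneg_pos)
  have pa: "p - 1 + \<alpha> > 0" using p \<alpha> by simp
  have lamZ: "lam * Z < (p - 1 + \<alpha>) * min a (1 / 2)"
    using lamsmall Z by (simp add: pos_less_divide_eq)
  have lamL: "lam * L \<le> (p - 1 + \<alpha>) / 2"
  proof -
    have "lam * L \<le> lam * Z" unfolding Z_def using lam L0 K Gm0
      by (intro mult_left_mono) (auto simp: algebra_simps intro!: mult_nonneg_nonneg)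
    also have "\<dots> \<le> (p - 1 + \<alpha>) * (1 / 2)" using lamZ pa
      by (smt (verit) min.cobounded2 mult_left_mono)
    finally show ?thesis by simp
  qed
  have lamLK: "lam * L * K * Gmax powr (e - 1) < (p - 1 + \<alpha>) * a"
  proof -
    have "lam * L * K * Gmax powr (e - 1) \<le> lam * Z" unfolding Z_def using lam L0 K Gm0
      by (simp add: algebra_simps mult_nonneg_nonneg)
    also have "\<dots> < (p - 1 + \<alpha>) * min a (1 / 2)" by (rule lamZ)
    also have "\<dots> \<le> (p - 1 + \<alpha>) * a" using pa by (intro mult_left_mono) auto
    finally show ?thesis .
  qed
  have HD1: "lam * q * (q - 1 + \<alpha>) * D \<le> lam * L * (I + J)"
  proof -
    have "lam * q * (q - 1 + \<alpha>) * D \<le> lam * q * (q - 1 + \<alpha>) * (\<gamma> * (I + J))"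
      using HD lam q1 qp p by (intro mult_left_mono) auto
    thus ?thesis unfolding L_def by (simp add: ac_simps)
  qed
  have gpe: "g powr e \<le> g * Gmax powr (e - 1)"
  proof -
    have "g powr e = g * g powr (e - 1)" using gp by (simp add: powr_diff)
    also have "\<dots> \<le> g * Gmax powr (e - 1)" using gGmax gp e by (intro mult_left_mono powr_mono2) auto
    finally show ?thesis .
  qed
  have JJ: "lam * L * J \<le> lam * L * K * g * Gmax powr (e - 1)"
  proof -
    have "J \<le> K * (g * Gmax powr (e - 1))" using HJ gpe K by (smt (verit) mult_left_mono)
    hence "lam * L * J \<le> lam * L * (K * (g * Gmax powr (e - 1)))" using lam L0 by (intro mult_left_mono) auto
    thus ?thesis by (simp add: ac_simps)
  qed
  have "(p - 1 + \<alpha>) * A \<le> lam * L * (I + J)"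
  proof -
    have "p * \<theta> - 1 + \<alpha> \<ge> 0" using p1 p \<alpha> by linarith
    hence "(p * \<theta> - 1 + \<alpha>) * B \<ge> 0" using B0 by simp
    thus ?thesis using Eq2 HD1 by linarith
  qed
  hence "(p - 1 + \<alpha>) * (a * g) + (p - 1 + \<alpha>) * I \<le> lam * L * I + lam * L * J"
    unfolding A_def by (simp add: algebra_simps)
  moreover have "lam * L * I \<le> (p - 1 + \<alpha>) * I"
  proof -
    have "lam * L \<le> p - 1 + \<alpha>" using lamL pa by (simp add: field_simps)
    thus ?thesis using I by (rule mult_right_mono)
  qed
  ultimately have "(p - 1 + \<alpha>) * (a * g) \<le> lam * L * K * g * Gmax powr (e - 1)" using JJ by linarith
  moreover have "lam * L * K * g * Gmax powr (e - 1) < (p - 1 + \<alpha>) * (a * g)"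
  proof -
    have "lam * L * K * Gmax powr (e - 1) * g < (p - 1 + \<alpha>) * a * g"
      using lamLK gp by (intro mult_strict_right_mono) auto
    thus ?thesis by (simp add: ac_simps)
  qed
  ultimately show False by simp
qed

lemma set_integral_le_nonint:
  fixes h k :: "'a \<Rightarrow> real"
  assumes k: "set_integrable M A k" and hk: "AE x in M. x \<in> A \<longrightarrow> h x \<le> k x"
    and k0: "AE x in M. x \<in> A \<longrightarrow> 0 \<le> k x"
  shows "(LINT x:A|M. h x) \<le> (LINT x:A|M. k x)"
proof (cases "set_integrable M A h")
  case True
  thus ?thesis using k hk by (intro set_integral_mono_AE) auto
next
  case False
  hence "(LINT x:A|M. h x) = 0"
    unfolding set_integrable_def set_lebesgue_integral_def by (rule not_integrable_integral_eq)
  moreover have "0 \<le> (LINT x:A|M. k x)"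
    unfolding set_lebesgue_integral_def using k0
    by (intro integral_nonneg_AE) (auto elim!: AE_mp intro!: AE_I2 simp: indicator_def)
  ultimately show ?thesis by simp
qed

lemma open_lebesgue_finite:
  fixes \<Omega> :: "'a::euclidean_space set"
  assumes "open \<Omega>" "bounded \<Omega>"
  shows "\<Omega> \<in> sets lebesgue" "emeasure lebesgue \<Omega> < \<infinity>"
proof -
  have b: "\<Omega> \<in> sets lborel" using assms by simp
  thus "\<Omega> \<in> sets lebesgue" by simp
  have "emeasure lebesgue \<Omega> = emeasure lborel \<Omega>" using b by (simp add: main_part_sets)
  thus "emeasure lebesgue \<Omega> < \<infinity>" using emeasure_bounded_finite[OF assms(2)] by simp
qed

lemma powr_set_integrable:
  fixes u :: "'a::euclidean_space \<Rightarrow> real"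
  assumes um: "u \<in> borel_measurable lebesgue"
    and fin: "(\<integral>\<^sup>+ x. ennreal (\<bar>u x\<bar> powr r) \<partial>lebesgue) < \<infinity>"
    and \<Omega>m: "\<Omega> \<in> sets lebesgue" and \<Omega>f: "emeasure lebesgue \<Omega> < \<infinity>"
    and a: "0 \<le> a" "a \<le> r"
  shows "set_integrable lebesgue \<Omega> (\<lambda>x. \<bar>u x\<bar> powr a)"
proof -
  have ir: "integrable lebesgue (\<lambda>x. \<bar>u x\<bar> powr r)"
    using fin um by (subst integrable_iff_bounded) auto
  have i1: "integrable lebesgue (indicator \<Omega> :: _ \<Rightarrow> real)"
    using \<Omega>m \<Omega>f by (simp add: integrable_indicator_iff)
  have "set_integrable lebesgue \<Omega> (\<lambda>x. 1 + \<bar>u x\<bar> powr r)"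
    unfolding set_integrable_def
    using Bochner_Integration.integrable_add[OF i1 integrable_mult_indicator[OF \<Omega>m ir]]
    by (simp add: indicator_def distrib_left)
  moreover have "set_borel_measurable lebesgue \<Omega> (\<lambda>x. \<bar>u x\<bar> powr a)"
    unfolding set_borel_measurable_def using \<Omega>m um by measurable
  moreover have "AE x in lebesgue. x \<in> \<Omega> \<longrightarrow> norm (\<bar>u x\<bar> powr a) \<le> norm (1 + \<bar>u x\<bar> powr r)"
  proof (intro AE_I2 impI)
    fix x
    have "\<bar>u x\<bar> powr a \<le> \<bar>u x\<bar> powr 0 + \<bar>u x\<bar> powr r" using a by (intro powr_interp) auto
    moreover have "\<bar>u x\<bar> powr 0 \<le> 1" by simp
    ultimately show "norm (\<bar>u x\<bar> powr a) \<le> norm (1 + \<bar>u x\<bar> powr r)" by simp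
  qed
  ultimately show ?thesis by (rule set_integrable_bound)
qed

lemma powr_set_integral_le:
  fixes u :: "'a::euclidean_space \<Rightarrow> real"
  assumes um: "u \<in> borel_measurable lebesgue"
    and bnd: "(\<integral>\<^sup>+ x. ennreal (\<bar>u x\<bar> powr r) \<partial>lebesgue) \<le> ennreal B" and B: "0 \<le> B"
    and \<Omega>m: "\<Omega> \<in> sets lebesgue"
  shows "(LINT x:\<Omega>|lebesgue. \<bar>u x\<bar> powr r) \<le> B"
proof -
  have "(LINT x:\<Omega>|lebesgue. \<bar>u x\<bar> powr r) = enn2real (\<integral>\<^sup>+ x. ennreal (indicator \<Omega> x *\<^sub>R \<bar>u x\<bar> powr r) \<partial>lebesgue)"
    unfolding set_lebesgue_integral_def using \<Omega>m um
    by (intro integral_eq_nn_integral) (measurable, auto)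
  also have "\<dots> \<le> enn2real (ennreal B)"
  proof (rule enn2real_mono)
    show "(\<integral>\<^sup>+ x. ennreal (indicator \<Omega> x *\<^sub>R \<bar>u x\<bar> powr r) \<partial>lebesgue) \<le> ennreal B"
      using bnd by (elim order_trans[rotated], intro nn_integral_mono) (auto simp: indicator_def)
  qed simp
  finally show ?thesis using B by simp
qed

lemma gagliardo_zero:
  fixes u :: "real^'n \<Rightarrow> real"
  assumes "AE x in lebesgue. u x = 0"
  shows "gagliardo_int p s u = 0"
proof -
  have "AE z in (lebesgue :: ((real^'n) \<times> (real^'n)) measure). u (fst z) = 0 \<and> u (snd z) = 0"
    using AE_lebesgue_fst[OF assms] AE_lebesgue_snd[OF assms] by eventually_elim auto
  hence "gagliardo_int p s u = (\<integral>\<^sup>+ z. 0 \<partial>(lebesgue :: ((real^'n) \<times> (real^'n)) measure))"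
    unfolding gagliardo_int_def by (intro nn_integral_cong_AE, elim AE_mp, intro AE_I2) simp
  thus ?thesis by simp
qed

lemma set_integrable_const_real:
  "A \<in> sets M \<Longrightarrow> emeasure M A < \<infinity> \<Longrightarrow> set_integrable M A (\<lambda>_. c :: real)"
  unfolding set_integrable_def
  using integrable_real_indicator[of A M] by (auto intro!: integrable_mult_left)

lemma powr_inv_powr: "0 \<le> x \<Longrightarrow> 0 < p \<Longrightarrow> (x powr (1 / p)) powr p = (x :: real)"
  by (simp add: powr_powr powr_one)

lemma powr_inv_powr2: "0 \<le> x \<Longrightarrow> 0 < p \<Longrightarrow> (x powr (1 / p)) powr (p * t) = (x :: real) powr t"
  by (simp add: powr_powr)

theorem lemma2p2:
  fixes \<Omega> :: "(real^'n) set"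
    and s p a b \<theta> \<alpha> q \<gamma> :: real
    and c :: "real^'n \<Rightarrow> real"
    and f F :: "real^'n \<Rightarrow> real \<Rightarrow> real"
  assumes "0 < s" "s < 1" "1 < p" "real CARD('n) > p * s"
    and "smooth_bounded_domain \<Omega>"
    and "0 < a" "0 < b" "1 < \<theta>" "0 < \<alpha>" "\<alpha> < 1"
    and "c \<in> borel_measurable lebesgue" "\<exists>M. AE x in lebesgue. \<bar>c x\<bar> \<le> M" "\<forall>x\<in>\<Omega>. 0 \<le> c x"
    and "p * \<theta> < q" "q \<le> real CARD('n) * p / (real CARD('n) - p * s)"
    and "\<forall>x t k. 0 < k \<longrightarrow> f x (k * t) = k powr (q - 1) * f x t"
    and "\<forall>x t. F x t = (LBINT \<tau>=0..t. f x \<tau>)"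
    and "\<forall>x t. q * F x t = t * f x t"
    and "\<forall>x t. \<bar>F x t\<bar> \<le> \<gamma> * \<bar>t\<bar> powr q"
  shows "\<exists>\<Lambda>>0. \<forall>lam. 0 < lam \<and> lam < \<Lambda> \<longrightarrow>
           Nehari0 p s \<Omega> a b \<theta> \<alpha> c lam q F = {u \<in> X0 p s \<Omega>. AE x in lebesgue. u x = 0}"
proof -
  note s = assms(1) and p = assms(3) and n = assms(4) and a = assms(6) and b = assms(7)
    and \<theta> = assms(8) and \<alpha> = assms(9,10) and c0 = assms(13) and pq = assms(14) and qcrit = assms(15)
    and Fq = assms(18) and Fb = assms(19)
  have \<Omega>o: "open \<Omega>" and \<Omega>b: "bounded \<Omega>"
    using assms(5) unfolding smooth_bounded_domain_def by auto
  have \<Omega>m[measurable]: "\<Omega> \<in> sets lebesgue" and \<Omega>f: "emeasure lebesgue \<Omega> < \<infinity>"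
    using open_lebesgue_finite[OF \<Omega>o \<Omega>b] by auto
  obtain R where R: "\<Omega> \<subseteq> ball 0 R" using bounded_subset_ballD[OF \<Omega>b, of 0] by blast
  define e where "e = real CARD('n) / (real CARD('n) - p * s)"
  have nps: "real CARD('n) - p * s > 0" using n by simp
  have e1: "e > 1" unfolding e_def using nps s p by (simp add: field_simps)
  have pe: "p \<le> p * e" using e1 p by simp
  have qe: "q \<le> p * e" using qcrit unfolding e_def by (simp add: field_simps)
  have p1: "p < p * \<theta>" using p \<theta> by simp
  have pq': "p \<le> q" using p1 pq by simp
  obtain K where K: "K > 0" and Kp: "\<forall>(u::real^'n \<Rightarrow> real) R. u \<in> borel_measurable lebesgue \<longrightarrow>
     (AE x in lebesgue. x \<notin> ball 0 R \<longrightarrow> u x = 0) \<longrightarrow> gagliardo_int p s u < \<infinity> \<longrightarrow>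
     (\<integral>\<^sup>+ x. ennreal (\<bar>u x\<bar> powr (p * e)) \<partial>lebesgue) \<le> ennreal (K * enn2real (gagliardo_int p s u) powr e)"
    using sobolev_X0[OF s p n] unfolding e_def by blast
  obtain M where M: "AE x in lebesgue. \<bar>c x\<bar> \<le> M" using assms(12) by blast
  define M1 where "M1 = max M 1"
  have M1: "M1 > 0" unfolding M1_def by simp
  have \<gamma>: "0 \<le> \<gamma>" using Fb[rule_format, of 0 1] by simp
  define m\<Omega> where "m\<Omega> = measure lebesgue \<Omega>"
  have m\<Omega>: "0 \<le> m\<Omega>" unfolding m\<Omega>_def by simp
  have qp: "q - p > 0" using pq' p1 pq by simp
  have q1: "q - 1 + \<alpha> > 0" using qp p \<alpha> by simp
  have pa: "p - 1 + \<alpha> > 0" using p \<alpha> by simp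
  define T0 where "T0 = (2 * (q - 1 + \<alpha>) * M1 / (q - p)) powr (1 / (p - 1 + \<alpha>))"
  have T0: "T0 > 0" unfolding T0_def using q1 M1 qp by simp
  define E where "E = T0 powr (1 - \<alpha>)"
  define \<epsilon> where "\<epsilon> = T0 powr ((1 - \<alpha>) - p)"
  have E0: "E \<ge> 0" and \<epsilon>0: "\<epsilon> \<ge> 0" unfolding E_def \<epsilon>_def by auto
  have \<epsilon>small: "(q - 1 + \<alpha>) * M1 * \<epsilon> \<le> (q - p) / 2"
  proof -
    have "T0 powr (p - 1 + \<alpha>) = 2 * (q - 1 + \<alpha>) * M1 / (q - p)"
      unfolding T0_def using pa q1 M1 qp by (simp add: powr_powr)
    moreover have "\<epsilon> = inverse (T0 powr (p - 1 + \<alpha>))"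
    proof -
      have ex: "(1 - \<alpha>) - p = - (p - 1 + \<alpha>)" by simp
      have "\<epsilon> = T0 powr (- (p - 1 + \<alpha>))" unfolding \<epsilon>_def by (simp only: ex)
      also have "\<dots> = inverse (T0 powr (p - 1 + \<alpha>))" by (rule powr_minus)
      finally show ?thesis .
    qed
    ultimately have "\<epsilon> = (q - p) / (2 * (q - 1 + \<alpha>) * M1)" by simp
    moreover define W where "W = (q - 1 + \<alpha>) * M1"
    moreover have "W > 0" unfolding W_def using q1 M1 by simp
    ultimately have "\<epsilon> = (q - p) / (2 * W)" "W > 0" by (simp_all add: mult.assoc)
    hence "W * \<epsilon> = (q - p) / 2" by simp
    thus ?thesis unfolding W_def by simp
  qed
  have young: "t powr (1 - \<alpha>) \<le> E + \<epsilon> * t powr p" if "0 \<le> t" for t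
    unfolding E_def \<epsilon>_def using powr_young_split[of t T0 "1 - \<alpha>" p] that T0 \<alpha> p by simp
  define K1 where "K1 = (q - 1 + \<alpha>) * M1 * E * m\<Omega>"
  define K2 where "K2 = 2 * K1 / (q - p)"
  define K3 where "K3 = (K1 + (q - 1 + \<alpha>) * M1 * \<epsilon> * K2) / ((q - p * \<theta>) * b)"
  define Gmax where "Gmax = K3 powr (1 / \<theta>)"
  define L where "L = q * (q - 1 + \<alpha>) * \<gamma>"
  define Z where "Z = L * (K * Gmax powr (e - 1) + 1) + 1"
  have L0: "L \<ge> 0" unfolding L_def using q1 \<gamma> qp p by simp
  have Z: "Z > 0" unfolding Z_def using L0 K by (simp add: add_nonneg_pos)
  define \<Lambda> where "\<Lambda> = (p - 1 + \<alpha>) * min a (1 / 2) / Z"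
  have \<Lambda>: "\<Lambda> > 0" unfolding \<Lambda>_def using pa a Z by simp
  show ?thesis
  proof (intro exI[of _ \<Lambda>] conjI allI impI \<Lambda>)
    fix lam assume lam: "0 < lam \<and> lam < \<Lambda>"
    show "Nehari0 p s \<Omega> a b \<theta> \<alpha> c lam q F = {u \<in> X0 p s \<Omega>. AE x in lebesgue. u x = 0}"
    proof (intro set_eqI iffI)
      fix u assume uN: "u \<in> Nehari0 p s \<Omega> a b \<theta> \<alpha> c lam q F"
      have uX: "u \<in> X0 p s \<Omega>" and ph1: "phi1 p s \<Omega> a b \<theta> \<alpha> c lam q F u = 0"
        and ph2: "phi2 p s \<Omega> a b \<theta> \<alpha> c lam q F u = 0"
        using uN unfolding Nehari0_def by auto
      have um[measurable]: "u \<in> borel_measurable lebesgue"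
        and u\<Omega>: "AE x in lebesgue. x \<notin> \<Omega> \<longrightarrow> u x = 0"
        and ug: "gagliardo_int p s u < \<infinity>"
        using uX unfolding X0_def by auto
      have uR: "AE x in lebesgue. x \<notin> ball 0 R \<longrightarrow> u x = 0"
        using u\<Omega> by (elim AE_mp) (use R in \<open>auto intro!: AE_I2\<close>)
      define g where "g = enn2real (gagliardo_int p s u)"
      have g0: "g \<ge> 0" unfolding g_def by simp
      have Sob: "(\<integral>\<^sup>+ x. ennreal (\<bar>u x\<bar> powr (p * e)) \<partial>lebesgue) \<le> ennreal (K * g powr e)"
        using Kp um uR ug unfolding g_def by blast
      have fin: "(\<integral>\<^sup>+ x. ennreal (\<bar>u x\<bar> powr (p * e)) \<partial>lebesgue) < \<infinity>"
        using Sob by (simp add: le_less_trans)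
      have iP: "set_integrable lebesgue \<Omega> (\<lambda>x. \<bar>u x\<bar> powr p)"
        using powr_set_integrable[OF um fin \<Omega>m \<Omega>f] p pe by simp
      have iPe: "set_integrable lebesgue \<Omega> (\<lambda>x. \<bar>u x\<bar> powr (p * e))"
        using powr_set_integrable[OF um fin \<Omega>m \<Omega>f] p e1 by simp
      have iE: "set_integrable lebesgue \<Omega> (\<lambda>_. E)" by (rule set_integrable_const_real[OF \<Omega>m \<Omega>f])
      define I where "I = (LINT x:\<Omega>|lebesgue. \<bar>u x\<bar> powr p)"
      define J where "J = (LINT x:\<Omega>|lebesgue. \<bar>u x\<bar> powr (p * e))"
      define C where "C = (LINT x:\<Omega>|lebesgue. c x * (max (u x) 0) powr (1 - \<alpha>))"
      define D where "D = (LINT x:\<Omega>|lebesgue. F x (max (u x) 0))"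
      have I0: "I \<ge> 0" unfolding I_def set_lebesgue_integral_def by (intro Bochner_Integration.integral_nonneg) simp
      have HJ: "J \<le> K * g powr e"
        unfolding J_def using K g0 by (intro powr_set_integral_le[OF um Sob _ \<Omega>m]) simp
      have HC: "C \<le> M1 * (E * m\<Omega> + \<epsilon> * I)"
      proof -
        have ik: "set_integrable lebesgue \<Omega> (\<lambda>x. M1 * (E + \<epsilon> * \<bar>u x\<bar> powr p))"
          using iE iP by (intro set_integrable_mult_right set_integral_add(1) set_integrable_mult_right) auto
        have "C \<le> (LINT x:\<Omega>|lebesgue. M1 * (E + \<epsilon> * \<bar>u x\<bar> powr p))"
          unfolding C_def
        proof (rule set_integral_le_nonint[OF ik])
          show "AE x in lebesgue. x \<in> \<Omega> \<longrightarrow> c x * (max (u x) 0) powr (1 - \<alpha>) \<le> M1 * (E + \<epsilon> * \<bar>u x\<bar> powr p)"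
            using M
          proof (elim AE_mp, intro AE_I2 impI)
            fix x assume cx: "\<bar>c x\<bar> \<le> M" and x: "x \<in> \<Omega>"
            have cM: "0 \<le> c x" "c x \<le> M1" using cx c0 x unfolding M1_def by auto
            have "c x * (max (u x) 0) powr (1 - \<alpha>) \<le> M1 * (max (u x) 0) powr (1 - \<alpha>)"
              using cM by (intro mult_right_mono) auto
            also have "\<dots> \<le> M1 * (E + \<epsilon> * (max (u x) 0) powr p)"
              using young[of "max (u x) 0"] M1 by (intro mult_left_mono) auto
            also have "\<dots> \<le> M1 * (E + \<epsilon> * \<bar>u x\<bar> powr p)"
              using M1 \<epsilon>0 p by (intro mult_left_mono add_left_mono powr_mono2) auto
            finally show "c x * (max (u x) 0) powr (1 - \<alpha>) \<le> M1 * (E + \<epsilon> * \<bar>u x\<bar> powr p)" .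
          qed
          show "AE x in lebesgue. x \<in> \<Omega> \<longrightarrow> 0 \<le> M1 * (E + \<epsilon> * \<bar>u x\<bar> powr p)"
            using M1 E0 \<epsilon>0 by (intro AE_I2) simp
        qed
        also have "(LINT x:\<Omega>|lebesgue. M1 * (E + \<epsilon> * \<bar>u x\<bar> powr p)) = M1 * (E * m\<Omega> + \<epsilon> * I)"
        proof -
          have "(LINT x:\<Omega>|lebesgue. E + \<epsilon> * \<bar>u x\<bar> powr p) = (LINT x:\<Omega>|lebesgue. E) + (LINT x:\<Omega>|lebesgue. \<epsilon> * \<bar>u x\<bar> powr p)"
            using iE iP by (intro set_integral_add(2)) auto
          also have "(LINT x:\<Omega>|lebesgue. E) = m\<Omega> * E"
            unfolding m\<Omega>_def using \<Omega>m \<Omega>f by (simp add: set_integral_const)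
          finally show ?thesis unfolding I_def by (simp add: ac_simps)
        qed
        finally show ?thesis .
      qed
      have HD: "D \<le> \<gamma> * (I + J)"
      proof -
        have ik: "set_integrable lebesgue \<Omega> (\<lambda>x. \<gamma> * (\<bar>u x\<bar> powr p + \<bar>u x\<bar> powr (p * e)))"
          using iP iPe by (intro set_integrable_mult_right set_integral_add(1)) auto
        have "D \<le> (LINT x:\<Omega>|lebesgue. \<gamma> * (\<bar>u x\<bar> powr p + \<bar>u x\<bar> powr (p * e)))"
          unfolding D_def
        proof (rule set_integral_le_nonint[OF ik])
          show "AE x in lebesgue. x \<in> \<Omega> \<longrightarrow> F x (max (u x) 0) \<le> \<gamma> * (\<bar>u x\<bar> powr p + \<bar>u x\<bar> powr (p * e))"
          proof (intro AE_I2 impI)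
            fix x
            have "F x (max (u x) 0) \<le> \<gamma> * \<bar>max (u x) 0\<bar> powr q"
              using Fb by (meson abs_le_D1)
            also have "\<dots> \<le> \<gamma> * \<bar>u x\<bar> powr q"
              using \<gamma> pq' p by (intro mult_left_mono powr_mono2) auto
            also have "\<dots> \<le> \<gamma> * (\<bar>u x\<bar> powr p + \<bar>u x\<bar> powr (p * e))"
              using \<gamma> pq' qe by (intro mult_left_mono powr_interp) auto
            finally show "F x (max (u x) 0) \<le> \<gamma> * (\<bar>u x\<bar> powr p + \<bar>u x\<bar> powr (p * e))" .
          qed
          show "AE x in lebesgue. x \<in> \<Omega> \<longrightarrow> 0 \<le> \<gamma> * (\<bar>u x\<bar> powr p + \<bar>u x\<bar> powr (p * e))"
            using \<gamma> by (intro AE_I2) simp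
        qed
        also have "(LINT x:\<Omega>|lebesgue. \<gamma> * (\<bar>u x\<bar> powr p + \<bar>u x\<bar> powr (p * e))) = \<gamma> * (I + J)"
          unfolding I_def J_def using iP iPe by (simp add: set_integral_add(2))
        finally show ?thesis .
      qed
      have X1: "X0norm p s u powr p = g"
        unfolding X0norm_def g_def[symmetric] using g0 p by (simp add: powr_inv_powr)
      have X2: "X0norm p s u powr (p * \<theta>) = g powr \<theta>"
        unfolding X0norm_def g_def[symmetric] using g0 p by (simp add: powr_inv_powr2)
      have L1: "Lnorm \<Omega> p u powr p = I"
        unfolding Lnorm_def I_def[symmetric] using I0 p by (simp add: powr_inv_powr)
      have E1: "a * g + I + b * g powr \<theta> - C - lam * q * D = 0"
        using ph1 unfolding phi1_def X1 X2 L1 C_def[symmetric] D_def[symmetric] .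
      have E2: "(p - 1) * (a * g + I) + b * (p * \<theta> - 1) * g powr \<theta> + \<alpha> * C - lam * q * (q - 1) * D = 0"
        using ph2 unfolding phi2_def X1 X2 L1 C_def[symmetric] D_def[symmetric] .
      have lamsmall: "lam < (p - 1 + \<alpha>) * min a (1 / 2) / Z" using lam unfolding \<Lambda>_def by simp
      have lam0: "0 < lam" using lam by simp
      have K0: "0 \<le> K" using K by simp
      have "g = 0"
        by (rule final_alg[OF a b p \<theta> pq \<alpha>(1) \<alpha>(2) \<gamma> lam0 M1 K0 e1 m\<Omega> g0 I0 E0 \<epsilon>0 \<epsilon>small E1 E2 HC HD HJ])
          (use lamsmall in \<open>simp add: Z_def L_def Gmax_def K3_def K2_def K1_def\<close>)
      hence "(\<integral>\<^sup>+ x. ennreal (\<bar>u x\<bar> powr (p * e)) \<partial>lebesgue) \<le> 0"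
        using Sob e1 by simp
      hence "(\<integral>\<^sup>+ x. ennreal (\<bar>u x\<bar> powr (p * e)) \<partial>lebesgue) = 0" by simp
      hence "AE x in lebesgue. ennreal (\<bar>u x\<bar> powr (p * e)) = 0"
        by (subst (asm) nn_integral_0_iff_AE) measurable
      hence "AE x in lebesgue. u x = 0"
        by (elim AE_mp) (auto intro!: AE_I2)
      thus "u \<in> {u \<in> X0 p s \<Omega>. AE x in lebesgue. u x = 0}" using uX by simp
    next
      fix u assume "u \<in> {u \<in> X0 p s \<Omega>. AE x in lebesgue. u x = 0}"
      hence uX: "u \<in> X0 p s \<Omega>" and u0: "AE x in lebesgue. u x = 0" by auto
      have g: "X0norm p s u = 0" unfolding X0norm_def gagliardo_zero[OF u0] using p by simp
      have F0: "F x 0 = 0" for x using Fq[rule_format, of x 0] pq p1 p by simp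
      have I: "(LINT x:\<Omega>|lebesgue. \<bar>u x\<bar> powr p) = 0"
        unfolding set_lebesgue_integral_def by (rule integral_eq_zero_AE, rule AE_mp[OF u0], rule AE_I2) simp
      have C: "(LINT x:\<Omega>|lebesgue. c x * (max (u x) 0) powr (1 - \<alpha>)) = 0"
        unfolding set_lebesgue_integral_def by (rule integral_eq_zero_AE, rule AE_mp[OF u0], rule AE_I2) simp
      have D: "(LINT x:\<Omega>|lebesgue. F x (max (u x) 0)) = 0"
        unfolding set_lebesgue_integral_def by (rule integral_eq_zero_AE, rule AE_mp[OF u0], rule AE_I2) (simp add: F0)
      have Ln: "Lnorm \<Omega> p u = 0" unfolding Lnorm_def I using p by simp
      have "phi1 p s \<Omega> a b \<theta> \<alpha> c lam q F u = 0" "phi2 p s \<Omega> a b \<theta> \<alpha> c lam q F u = 0"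
        unfolding phi1_def phi2_def g Ln C D using p \<theta> by simp_all
      thus "u \<in> Nehari0 p s \<Omega> a b \<theta> \<alpha> c lam q F" using uX unfolding Nehari0_def by simp
    qed
  qed
qed


end
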